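(* Let $D$ be a closed $\forall^+$ type of system $\mathcal F$ not containing the type constant $O$. Then $D$ is a syntactical data type, i.e. $D$ is both an input type and an output type.
   Context: $\lambda$-terms are those of the untyped $\lambda$-calculus; $Fv(t)$ denotes the free variables of $t$; a term is normal if it contains no $\beta$-redex. Types of system $\mathcal F$ are built from type variables and type constants (atomic, not quantifiable; $O$ is such a constant) with $\rightarrow$ and $\forall$; only proper types are considered (in every $\forall X A$, $X$ occurs free in $A$). Typing $\Gamma\vdash_{\mathcal F} t:A$ is given by: (ax) $\Gamma \vdash x_i : A_i$ for $x_i:A_i\in\Gamma$; ($\rightarrow_i$) from $\Gamma, x:B \vdash t : C$ infer $\Gamma \vdash \lambda x t : B \rightarrow C$; ($\rightarrow_e$) from $\Gamma \vdash u : B\rightarrow C$ and $\Gamma \vdash v : B$ infer $\Gamma \vdash (u)v : C$; ($\forall_i$) from $\Gamma \vdash t : A$, $X$ not free in $\Gamma$, infer $\Gamma \vdash t : \forall X A$; ($\forall_e$) from $\Gamma \vdash t : \forall X A$ infer $\Gamma \vdash t : A[C/X]$ for any type $C$. $\mathcal F_0$ is $\mathcal F$ without ($\forall_e$). Input type: a closed type $E$ such that for every normal $t$, $\vdash_{\mathcal F} t:E$ implies $\vdash_{\mathcal F_0} t:E$. Output type: a closed type $S$ not containing $O$ such that for every normal $t$ and variable $\alpha$, $\alpha:O\vdash_{\mathcal F} t:S$ implies $\alpha\notin Fv(t)$. The classes $\forall^+$, $\forall^-$: every type variable is both; if $A$ is $\forall^+$ (resp. $\forall^-$) and $B$ is $\forall^-$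 (resp. $\forall^+$) then $B\rightarrow A$ is $\forall^+$ (resp. $\forall^-$); if $A$ is $\forall^+$ and $X$ is free in $A$ then $\forall XA$ is $\forall^+$. *)

theory Defs
  imports Main
begin

section \<open>Types of system F (de Bruijn indices for type variables)\<close>

datatype ty = TVar nat | TConst nat | Arr ty ty | All ty

definition tyO :: ty where "tyO = TConst 0"

fun fvt :: "ty \<Rightarrow> nat set" where
  "fvt (TVar n) = {n}"
| "fvt (TConst c) = {}"
| "fvt (Arr A B) = fvt A \<union> fvt B"
| "fvt (All A) = {n. Suc n \<in> fvt A}"

fun consts_of :: "ty \<Rightarrow> nat set" where
  "consts_of (TVar n) = {}"
| "consts_of (TConst c) = {c}"
| "consts_of (Arr A B) = consts_of A \<union> consts_of B"
| "consts_of (All A) = consts_of A"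

definition closed_ty :: "ty \<Rightarrow> bool" where
  "closed_ty A \<longleftrightarrow> fvt A = {}"

fun proper :: "ty \<Rightarrow> bool" where
  "proper (TVar n) = True"
| "proper (TConst c) = True"
| "proper (Arr A B) = (proper A \<and> proper B)"
| "proper (All A) = (0 \<in> fvt A \<and> proper A)"

fun lift :: "nat \<Rightarrow> ty \<Rightarrow> ty" where
  "lift k (TVar n) = (if n < k then TVar n else TVar (Suc n))"
| "lift k (TConst c) = TConst c"
| "lift k (Arr A B) = Arr (lift k A) (lift k B)"
| "lift k (All A) = All (lift (Suc k) A)"

fun subst :: "nat \<Rightarrow> ty \<Rightarrow> ty \<Rightarrow> ty" where
  "subst k C (TVar n) = (if n < k then TVar n else if n = k then C else TVar (n - 1))"
| "subst k C (TConst c) = TConst c"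
| "subst k C (Arr A B) = Arr (subst k C A) (subst k C B)"
| "subst k C (All A) = All (subst (Suc k) (lift 0 C) A)"

datatype trm = Var nat | Lam nat trm | App trm trm

fun fv :: "trm \<Rightarrow> nat set" where
  "fv (Var x) = {x}"
| "fv (Lam x t) = fv t - {x}"
| "fv (App u v) = fv u \<union> fv v"

fun normal :: "trm \<Rightarrow> bool" where
  "normal (Var x) = True"
| "normal (Lam x t) = normal t"
| "normal (App (Lam x t) v) = False"
| "normal (App u v) = (normal u \<and> normal v)"

section \<open>Typing in F (flag True) and F0 (flag False, no \<forall>-elimination)\<close>

type_synonym ctx = "nat \<Rightarrow> ty option"

inductive typing :: "bool \<Rightarrow> ctx \<Rightarrow> trm \<Rightarrow> ty \<Rightarrow> bool" where
  ax: "\<Gamma> x = Some A \<Longrightarrow> typing e \<Gamma> (Var x) A"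
| arr_i: "proper B \<Longrightarrow> typing e (\<Gamma>(x \<mapsto> B)) t C \<Longrightarrow> typing e \<Gamma> (Lam x t) (Arr B C)"
| arr_e: "typing e \<Gamma> u (Arr B C) \<Longrightarrow> typing e \<Gamma> v B \<Longrightarrow> typing e \<Gamma> (App u v) C"
| all_i: "0 \<in> fvt A \<Longrightarrow> typing e (map_option (lift 0) \<circ> \<Gamma>) t A \<Longrightarrow> typing e \<Gamma> t (All A)"
| all_e: "e \<Longrightarrow> proper C \<Longrightarrow> typing e \<Gamma> t (All A) \<Longrightarrow> typing e \<Gamma> t (subst 0 C A)"

abbreviation typF :: "ctx \<Rightarrow> trm \<Rightarrow> ty \<Rightarrow> bool" where
  "typF \<equiv> typing True"

abbreviation typF0 :: "ctx \<Rightarrow> trm \<Rightarrow> ty \<Rightarrow> bool" where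
  "typF0 \<equiv> typing False"

definition input_type :: "ty \<Rightarrow> bool" where
  "input_type E \<longleftrightarrow> proper E \<and> closed_ty E \<and>
     (\<forall>t. normal t \<longrightarrow> typF Map.empty t E \<longrightarrow> typF0 Map.empty t E)"

definition output_type :: "ty \<Rightarrow> bool" where
  "output_type S \<longleftrightarrow> proper S \<and> closed_ty S \<and> 0 \<notin> consts_of S \<and>
     (\<forall>t \<alpha>. normal t \<longrightarrow> typF (Map.empty(\<alpha> \<mapsto> tyO)) t S \<longrightarrow> \<alpha> \<notin> fv t)"

definition syntactical_data_type :: "ty \<Rightarrow> bool" where
  "syntactical_data_type D \<longleftrightarrow> input_type D \<and> output_type D"

inductive all_pos :: "ty \<Rightarrow> bool" and all_neg :: "ty \<Rightarrow> bool" where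
  pos_var: "all_pos (TVar n)"
| neg_var: "all_neg (TVar n)"
| pos_arr: "all_pos A \<Longrightarrow> all_neg B \<Longrightarrow> all_pos (Arr B A)"
| neg_arr: "all_neg A \<Longrightarrow> all_pos B \<Longrightarrow> all_neg (Arr B A)"
| pos_all: "all_pos A \<Longrightarrow> 0 \<in> fvt A \<Longrightarrow> all_pos (All A)"

end

theory Submission
  imports Defs
begin

lemma L1: "n < k \<Longrightarrow> (n \<in> fvt (lift k A)) = (n \<in> fvt A)"
  by (induction A arbitrary: n k) auto

lemma L2: "proper A \<Longrightarrow> proper (lift k A)"
  by (induction A arbitrary: k) (auto simp: L1)

lemma L3: "n < k \<Longrightarrow> n \<in> fvt A \<Longrightarrow> n \<in> fvt (subst k C A)"
  by (induction A arbitrary: n k C) auto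

lemma L4: "proper A \<Longrightarrow> proper C \<Longrightarrow> proper (subst k C A)"
  by (induction A arbitrary: k C) (auto simp: L2 L3)

inductive_simps pos_simps: "all_pos (TVar n)" "all_pos (TConst c)" "all_pos (Arr A B)" "all_pos (All A)"
inductive_simps neg_simps: "all_neg (TVar n)" "all_neg (TConst c)" "all_neg (Arr A B)" "all_neg (All A)"

lemma L5p: "all_pos A \<Longrightarrow> \<forall>k. all_pos (lift k A)" and L5n: "all_neg A' \<Longrightarrow> \<forall>k. all_neg (lift k A')"
  by (induction A and A' rule: all_pos_all_neg.inducts) (auto simp: pos_simps neg_simps L1)

lemma L5: "(all_pos A \<longrightarrow> all_pos (lift k A)) \<and> (all_neg A' \<longrightarrow> all_neg (lift k' A'))"
  using L5p L5n by blast

lemma L6: "k \<notin> fvt (lift k A)"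
  by (induction A arbitrary: k) auto

lemma L7: "proper A \<Longrightarrow> (all_pos (subst k C A) \<longrightarrow> all_pos A) \<and> (all_neg (subst k C A) \<longrightarrow> all_neg A)"
  by (induction A arbitrary: k C) (auto simp: pos_simps neg_simps)

lemma L8: "subst k C (lift k B) = B"
  by (induction B arbitrary: k C) auto

lemma L9: "j \<le> k \<Longrightarrow> lift (Suc k) (lift j C) = lift j (lift k C)"
  by (induction C arbitrary: j k) auto

lemma L10: "j \<le> k \<Longrightarrow> subst (Suc k) (lift j C) (lift j B) = lift j (subst k C B)"
proof (induction B arbitrary: j k C)
  case (All B)
  have "lift 0 (lift j C) = lift (Suc j) (lift 0 C)" using L9[of 0 j C] by simp
  with All show ?case by simp
qed auto

lemma L11: "typing e \<Gamma> t A \<Longrightarrow> \<not> e \<Longrightarrow> proper C \<Longrightarrow>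
   typing e (map_option (subst k C) \<circ> \<Gamma>) t (subst k C A)"
proof (induction arbitrary: k C rule: typing.induct)
  case (ax \<Gamma> x A e)
  then show ?case by (auto intro: typing.ax)
next
  case (arr_i B e \<Gamma> x t C')
  have eq: "map_option (subst k C) \<circ> \<Gamma>(x \<mapsto> B) = (map_option (subst k C) \<circ> \<Gamma>)(x \<mapsto> subst k C B)"
    by auto
  have h0: "typing e (map_option (subst k C) \<circ> \<Gamma>(x \<mapsto> B)) t (subst k C C')"
    using arr_i.IH[OF arr_i.prems] .
  have h: "typing e ((map_option (subst k C) \<circ> \<Gamma>)(x \<mapsto> subst k C B)) t (subst k C C')"
    using h0 unfolding eq .
  have p: "proper (subst k C B)" by (rule L4) (use arr_i in auto)
  show ?case unfolding subst.simps by (rule typing.arr_i[OF p h])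
next
  case (arr_e e \<Gamma> u B C' v)
  have h1: "typing e (map_option (subst k C) \<circ> \<Gamma>) u (subst k C (Arr B C'))"
    by (rule arr_e.IH(1)[OF arr_e.prems])
  have h2: "typing e (map_option (subst k C) \<circ> \<Gamma>) v (subst k C B)"
    by (rule arr_e.IH(2)[OF arr_e.prems])
  show ?case by (rule typing.arr_e[OF h1[unfolded subst.simps] h2])
next
  case (all_i A e \<Gamma> t)
  have e: "map_option (subst (Suc k) (lift 0 C)) \<circ> (map_option (lift 0) \<circ> \<Gamma>)
     = map_option (lift 0) \<circ> (map_option (subst k C) \<circ> \<Gamma>)"
    by (auto simp: fun_eq_iff option.map_comp L10[of 0 k] intro!: option.map_cong0)
  have "typing e (map_option (subst (Suc k) (lift 0 C)) \<circ> (map_option (lift 0) \<circ> \<Gamma>)) t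
      (subst (Suc k) (lift 0 C) A)"
    using all_i.IH[OF all_i.prems(1) L2[OF all_i.prems(2)]] .
  then have h': "typing e (map_option (lift 0) \<circ> (map_option (subst k C) \<circ> \<Gamma>)) t
      (subst (Suc k) (lift 0 C) A)" unfolding e .
  have f: "0 \<in> fvt (subst (Suc k) (lift 0 C) A)" by (rule L3) (simp, rule all_i(1))
  show ?case unfolding subst.simps by (rule typing.all_i[OF f h'])
next
  case (all_e e C' \<Gamma> t A)
  then show ?case by simp
qed

lemma proper_typing: "typing e \<Gamma> t T \<Longrightarrow> (\<forall>x A. \<Gamma> x = Some A \<longrightarrow> proper A) \<Longrightarrow> proper T"
proof (induction rule: typing.induct)
  case (all_i A e \<Gamma> t)
  have "\<forall>x A. (map_option (lift 0) \<circ> \<Gamma>) x = Some A \<longrightarrow> proper A"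
    using all_i.prems by (auto simp: L2)
  with all_i show ?case by auto
next
  case (all_e e C \<Gamma> t A)
  then show ?case by (auto intro: L4)
qed auto

definition negctx :: "ctx \<Rightarrow> bool" where
  "negctx \<Gamma> \<longleftrightarrow> (\<forall>x A. \<Gamma> x = Some A \<longrightarrow> all_neg A \<and> proper A)"

definition ctxfv :: "ctx \<Rightarrow> nat set" where
  "ctxfv \<Gamma> = {n. \<exists>x A. \<Gamma> x = Some A \<and> n \<in> fvt A}"

definition neutral :: "trm \<Rightarrow> bool" where
  "neutral t \<longleftrightarrow> (\<forall>x u. t \<noteq> Lam x u)"

lemma no_all_neg: "\<not> all_neg (All A)"
  by (auto elim: all_neg.cases)

lemma lift_ctx_0: "0 \<notin> ctxfv (map_option (lift 0) \<circ> \<Gamma>)"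
  using L6[of 0] by (auto simp: ctxfv_def)

lemma F0_all_inv:
  assumes "typing False \<Gamma> (Lam x u) (All A)"
  shows "typing False (map_option (lift 0) \<circ> \<Gamma>) (Lam x u) A"
  using assms by (cases rule: typing.cases) auto

lemma ctx_subst_lift: "map_option (subst 0 C) \<circ> (map_option (lift 0) \<circ> \<Gamma>) = \<Gamma>"
  by (auto simp: fun_eq_iff option.map_comp L8 comp_def option.map_ident)

lemma input_main:
  "typing e \<Gamma> t T \<Longrightarrow> e \<Longrightarrow> normal t \<Longrightarrow> negctx \<Gamma> \<Longrightarrow>
    (neutral t \<longrightarrow> all_neg T \<and> fvt T \<subseteq> ctxfv \<Gamma> \<and> typF0 \<Gamma> t T) \<and>
    (all_pos T \<longrightarrow> typF0 \<Gamma> t T)"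
proof (induction rule: typing.induct)
  case (ax \<Gamma> x A e)
  have "all_neg A" using ax unfolding negctx_def by blast
  moreover have "fvt A \<subseteq> ctxfv \<Gamma>" using ax(1) unfolding ctxfv_def by blast
  moreover have "typF0 \<Gamma> (Var x) A" by (rule typing.ax) (rule ax(1))
  ultimately show ?case by blast
next
  case (arr_i B e \<Gamma> x t C)
  {
    assume "all_pos (Arr B C)"
    then have nb: "all_neg B" and pc: "all_pos C" by (auto simp: pos_simps)
    have ng: "negctx (\<Gamma>(x \<mapsto> B))" using nb arr_i.prems(3) arr_i(1) unfolding negctx_def by auto
    have nt: "normal t" using arr_i.prems by simp
    from conjunct2[OF arr_i.IH[OF arr_i.prems(1) nt ng]] pc have "typF0 (\<Gamma>(x \<mapsto> B)) t C" by (rule mp)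
    then have "typF0 \<Gamma> (Lam x t) (Arr B C)" by (rule typing.arr_i[OF arr_i(1)])
  }
  moreover have "\<not> neutral (Lam x t)" by (simp add: neutral_def)
  ultimately show ?case by blast
next
  case (arr_e e \<Gamma> u B C v)
  have nu: "neutral u" "normal u" "normal v" using arr_e.prems(2)
    by (cases u; auto simp: neutral_def)+
  have h: "all_neg (Arr B C)" "fvt (Arr B C) \<subseteq> ctxfv \<Gamma>" "typF0 \<Gamma> u (Arr B C)"
    using conjunct1[OF arr_e.IH(1)[OF arr_e.prems(1) nu(2) arr_e.prems(3)]] nu(1) by blast+
  then have nc: "all_neg C" and pb: "all_pos B" by (auto simp: neg_simps)
  have "typF0 \<Gamma> v B"
    using conjunct2[OF arr_e.IH(2)[OF arr_e.prems(1) nu(3) arr_e.prems(3)]] pb by (rule mp)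
  then have "typF0 \<Gamma> (App u v) C" by (rule typing.arr_e[OF h(3)])
  moreover have "fvt C \<subseteq> ctxfv \<Gamma>" using h(2) by simp
  ultimately show ?case using nc by blast
next
  case (all_i A e \<Gamma> t)
  have ng: "negctx (map_option (lift 0) \<circ> \<Gamma>)" using all_i.prems(3)
    by (auto simp: negctx_def L5 L2)
  note IH = all_i.IH[OF all_i.prems(1) all_i.prems(2) ng]
  have "\<not> neutral t"
  proof
    assume "neutral t"
    with IH have "fvt A \<subseteq> ctxfv (map_option (lift 0) \<circ> \<Gamma>)" by blast
    with all_i(1) lift_ctx_0 show False by blast
  qed
  moreover {
    assume "all_pos (All A)"
    then have "all_pos A" by (simp add: pos_simps)
    with IH have "typF0 (map_option (lift 0) \<circ> \<Gamma>) t A" by blast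
    then have "typF0 \<Gamma> t (All A)" by (rule typing.all_i[OF all_i(1)])
  }
  ultimately show ?case by blast
next
  case (all_e e C \<Gamma> t A)
  note IH = all_e.IH[OF all_e.prems]
  have nn: "\<not> neutral t" using IH no_all_neg by blast
  then obtain x u where t: "t = Lam x u" by (auto simp: neutral_def)
  have pA: "proper (All A)"
    using proper_typing[OF all_e(3)] all_e.prems(3) by (auto simp: negctx_def)
  {
    assume ap: "all_pos (subst 0 C A)"
    then have "all_pos A" using L7[of A 0 C] pA by auto
    with pA have "all_pos (All A)" by (auto intro: pos_all)
    with IH have "typF0 \<Gamma> t (All A)" by blast
    then have "typF0 (map_option (lift 0) \<circ> \<Gamma>) t A" using t F0_all_inv by simp
    from L11[OF this _ all_e(2), of 0] have "typF0 \<Gamma> t (subst 0 C A)"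
      by (simp add: ctx_subst_lift)
  }
  with nn show ?case by blast
qed

definition mixctx :: "ctx \<Rightarrow> bool" where
  "mixctx \<Gamma> \<longleftrightarrow> (\<forall>x A. \<Gamma> x = Some A \<longrightarrow> A = tyO \<or> (all_neg A \<and> proper A))"

definition Oset :: "ctx \<Rightarrow> nat set" where
  "Oset \<Gamma> = {x. \<Gamma> x = Some tyO}"

lemma no_pos_O: "\<not> all_pos tyO" "\<not> all_neg tyO"
  by (auto simp: tyO_def elim: all_pos.cases all_neg.cases)

lemma output_main:
  "typing e \<Gamma> t T \<Longrightarrow> normal t \<Longrightarrow> mixctx \<Gamma> \<Longrightarrow>
    (neutral t \<longrightarrow> (T = tyO \<and> (\<exists>y. t = Var y \<and> \<Gamma> y = Some tyO)) \<or>
        (all_neg T \<and> fvt T \<subseteq> ctxfv \<Gamma> \<and> fv t \<inter> Oset \<Gamma> = {})) \<and>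
    (all_pos T \<longrightarrow> fv t \<inter> Oset \<Gamma> = {})"
proof (induction rule: typing.induct)
  case (ax \<Gamma> x A e)
  show ?case
  proof (cases "A = tyO")
    case True
    then show ?thesis using ax(1) no_pos_O by blast
  next
    case False
    then have "all_neg A" using ax unfolding mixctx_def by blast
    moreover have "fvt A \<subseteq> ctxfv \<Gamma>" using ax(1) unfolding ctxfv_def by blast
    moreover have "fv (Var x) \<inter> Oset \<Gamma> = {}" using ax(1) False by (simp add: Oset_def)
    ultimately show ?thesis by blast
  qed
next
  case (arr_i B e \<Gamma> x t C)
  {
    assume "all_pos (Arr B C)"
    then have nb: "all_neg B" and pc: "all_pos C" by (auto simp: pos_simps)
    have ng: "mixctx (\<Gamma>(x \<mapsto> B))" using nb arr_i.prems(2) arr_i(1) unfolding mixctx_def by auto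
    have nt: "normal t" using arr_i.prems by simp
    from conjunct2[OF arr_i.IH[OF nt ng]] pc have d: "fv t \<inter> Oset (\<Gamma>(x \<mapsto> B)) = {}" by (rule mp)
    have "fv (Lam x t) \<inter> Oset \<Gamma> = {}"
    proof (rule ccontr)
      assume "fv (Lam x t) \<inter> Oset \<Gamma> \<noteq> {}"
      then obtain y where "y \<in> fv t" "y \<noteq> x" "\<Gamma> y = Some tyO" by (auto simp: Oset_def)
      with d show False by (auto simp: Oset_def)
    qed
  }
  moreover have "\<not> neutral (Lam x t)" by (simp add: neutral_def)
  ultimately show ?case by blast
next
  case (arr_e e \<Gamma> u B C v)
  have nu: "neutral u" "normal u" "normal v" using arr_e.prems(1)
    by (cases u; auto simp: neutral_def)+
  have ne: "Arr B C \<noteq> tyO" by (simp add: tyO_def)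
  have h: "all_neg (Arr B C)" "fvt (Arr B C) \<subseteq> ctxfv \<Gamma>" "fv u \<inter> Oset \<Gamma> = {}"
    using conjunct1[OF arr_e.IH(1)[OF nu(2) arr_e.prems(2)]] nu(1) ne by blast+
  then have nc: "all_neg C" and pb: "all_pos B" by (auto simp: neg_simps)
  have "fv v \<inter> Oset \<Gamma> = {}"
    using conjunct2[OF arr_e.IH(2)[OF nu(3) arr_e.prems(2)]] pb by (rule mp)
  then have "fv (App u v) \<inter> Oset \<Gamma> = {}" using h(3) by auto
  moreover have "fvt C \<subseteq> ctxfv \<Gamma>" using h(2) by simp
  moreover have "\<not> all_pos C \<or> True" by simp
  ultimately show ?case using nc by blast
next
  case (all_i A e \<Gamma> t)
  have ng: "mixctx (map_option (lift 0) \<circ> \<Gamma>)" unfolding mixctx_def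
  proof (intro allI impI)
    fix x A' assume "(map_option (lift 0) \<circ> \<Gamma>) x = Some A'"
    then obtain z where z: "\<Gamma> x = Some z" "A' = lift 0 z" by auto
    then have "z = tyO \<or> (all_neg z \<and> proper z)" using all_i.prems(2) unfolding mixctx_def by blast
    then show "A' = tyO \<or> (all_neg A' \<and> proper A')"
      using z(2) L5 L2 by (auto simp: tyO_def)
  qed
  have os: "Oset (map_option (lift 0) \<circ> \<Gamma>) = Oset \<Gamma>"
  proof -
    have "lift 0 B = tyO \<longleftrightarrow> B = tyO" for B by (cases B) (auto simp: tyO_def)
    then show ?thesis by (auto simp: Oset_def)
  qed
  note IH = all_i.IH[OF all_i.prems(1) ng]
  have "\<not> neutral t"
  proof
    assume "neutral t"
    with IH have "A = tyO \<or> fvt A \<subseteq> ctxfv (map_option (lift 0) \<circ> \<Gamma>)" by blast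
    moreover have "A \<noteq> tyO" using all_i(1) by (auto simp: tyO_def)
    ultimately show False using all_i(1) lift_ctx_0 by blast
  qed
  moreover {
    assume "all_pos (All A)"
    then have "all_pos A" by (simp add: pos_simps)
    with conjunct2[OF IH] have "fv t \<inter> Oset (map_option (lift 0) \<circ> \<Gamma>) = {}" by (rule mp)
    then have "fv t \<inter> Oset \<Gamma> = {}" unfolding os .
  }
  ultimately show ?case by blast
next
  case (all_e e C \<Gamma> t A)
  note IH = all_e.IH[OF all_e.prems]
  have "All A \<noteq> tyO" by (simp add: tyO_def)
  then have nn: "\<not> neutral t" using IH no_all_neg by blast
  have pA: "proper (All A)"
  proof (rule proper_typing[OF all_e(3)], intro allI impI)
    fix x B assume "\<Gamma> x = Some B"
    then have "B = tyO \<or> (all_neg B \<and> proper B)" using all_e.prems(2) unfolding mixctx_def by blast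
    then show "proper B" by (auto simp: tyO_def)
  qed
  {
    assume ap: "all_pos (subst 0 C A)"
    then have "all_pos A" using L7[of A 0 C] pA by auto
    with pA have "all_pos (All A)" by (auto intro: pos_all)
    with IH have "fv t \<inter> Oset \<Gamma> = {}" by blast
  }
  with nn show ?case by blast
qed

theorem theorem2p2p4:
  assumes "proper D" and "closed_ty D" and "all_pos D" and "0 \<notin> consts_of D"
  shows "syntactical_data_type D"
proof -
  have "input_type D"
    unfolding input_type_def
    using assms input_main[of True Map.empty] by (auto simp: negctx_def)
  moreover have "output_type D"
    unfolding output_type_def
  proof (intro conjI allI impI)
    fix t \<alpha> assume n1: "normal t" and n2: "typF (Map.empty(\<alpha> \<mapsto> tyO)) t D"
    have m: "mixctx (Map.empty(\<alpha> \<mapsto> tyO))" by (simp add: mixctx_def)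
    have a: "\<alpha> \<in> Oset (Map.empty(\<alpha> \<mapsto> tyO))" by (simp add: Oset_def)
    from output_main[OF n2 n1 m] assms(3) a
    show "\<alpha> \<notin> fv t" by blast
  qed (use assms in auto)
  ultimately show ?thesis by (simp add: syntactical_data_type_def)
qed

end
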